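(* Up to homeomorphism, the Sorgenfrey line is the unique Hausdorff topological space that has a Sorgenfrey base which is locally strict and has strict branches.
   Context: The Sorgenfrey line is $\mathbb R$ with the topology generated by $\{[a,b)\}$. Notation: ${}^{<\omega}\omega$, ${}^\omega\omega$ finite/infinite sequences of naturals; $a^\frown k$ extends $a$ by $k$; $a\triangleleft b$ iff there is $n$ in both domains with $a\upharpoonright n=b\upharpoonright n$ and $a(n)<b(n)$. A Souslin scheme on $X$ is a family $\mathbf V=\langle V_a\rangle_{a\in{}^{<\omega}\omega}$ of subsets of $X$; $\mathrm{fruit}(\mathbf V,p)=\bigcap_nV_{p\upharpoonright n}$; covering: $V_{\langle\rangle}=X$ and $V_a=\bigcup_nV_{a^\frown n}$; complete: all fruits nonempty; open: all $V_a$ open; has strict branches: every fruit is a singleton; locally strict: $V_a=\bigcup_nV_{a^\frown n}$ and $V_{a^\frown m}\cap V_{a^\frown k}=\emptyset$ for all $a$ and $m\ne k$. $\mathrm{branches}(\mathbf V,x)=\{q: x\in\mathrm{fruit}(\mathbf V,q)\}$; $\mathrm{rsequences}(q,n)=\{p:q\triangleleft p,\ q\upharpoonright n=p\upharpoonright n\}$; $\mathrm{cut}(\mathbf V,q,n)=\bigcup\{\mathrm{fruit}(\mathbf V,p):p\in\mathrm{rsequences}(q,n)\}$. A branch $q$ of $x$ is a $\tau$-base branch of $x$ if $\{\mathrm{cut}(\mathbf V,q,m)\cup\{x\}:m\in\omega\}$ is an open neighborhood base at $x$; $\mathrm{BB}(\mathbf V,x,\tau)$ is the set of these. A Sorgenfrey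 base for a Hausdorff $\langle X,\tau\rangle$ is an open complete covering Souslin scheme with (S1) for all $x$, $q\in\mathrm{branches}(\mathbf V,x)$, $n$, some $t\in\mathrm{BB}(\mathbf V,x,\tau)$ has $t\upharpoonright n=q\upharpoonright n$; (S2) every $q\in{}^\omega\omega$ lies in $\mathrm{BB}(\mathbf V,z,\tau)$ for some $z$. *)

theory Defs
  imports "HOL-Analysis.Analysis"
begin

type_synonym 'a souslin_scheme = "nat list \<Rightarrow> 'a set"

definition sorgenfrey_line :: "real topology" where
  "sorgenfrey_line = topology_generated_by {{a..<b} | a b. True}"

definition restr :: "(nat \<Rightarrow> nat) \<Rightarrow> nat \<Rightarrow> nat list" where
  "restr p n = map p [0..<n]"

definition lex_less :: "(nat \<Rightarrow> nat) \<Rightarrow> (nat \<Rightarrow> nat) \<Rightarrow> bool" where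
  "lex_less a b \<longleftrightarrow> (\<exists>n. restr a n = restr b n \<and> a n < b n)"

definition fruit :: "'a souslin_scheme \<Rightarrow> (nat \<Rightarrow> nat) \<Rightarrow> 'a set" where
  "fruit V p = (\<Inter>n. V (restr p n))"

definition covering_scheme :: "'a topology \<Rightarrow> 'a souslin_scheme \<Rightarrow> bool" where
  "covering_scheme X V \<longleftrightarrow> V [] = topspace X \<and> (\<forall>a. V a = (\<Union>n. V (a @ [n])))"

definition complete_scheme :: "'a souslin_scheme \<Rightarrow> bool" where
  "complete_scheme V \<longleftrightarrow> (\<forall>p. fruit V p \<noteq> {})"

definition open_scheme :: "'a topology \<Rightarrow> 'a souslin_scheme \<Rightarrow> bool" where
  "open_scheme X V \<longleftrightarrow> (\<forall>a. openin X (V a))"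

definition strict_branches :: "'a souslin_scheme \<Rightarrow> bool" where
  "strict_branches V \<longleftrightarrow> (\<forall>p. \<exists>x. fruit V p = {x})"

definition locally_strict :: "'a souslin_scheme \<Rightarrow> bool" where
  "locally_strict V \<longleftrightarrow> (\<forall>a. V a = (\<Union>n. V (a @ [n])) \<and>
      (\<forall>m k. m \<noteq> k \<longrightarrow> V (a @ [m]) \<inter> V (a @ [k]) = {}))"

definition branches :: "'a souslin_scheme \<Rightarrow> 'a \<Rightarrow> (nat \<Rightarrow> nat) set" where
  "branches V x = {q. x \<in> fruit V q}"

definition rsequences :: "(nat \<Rightarrow> nat) \<Rightarrow> nat \<Rightarrow> (nat \<Rightarrow> nat) set" where
  "rsequences q n = {p. lex_less q p \<and> restr q n = restr p n}"

definition cut :: "'a souslin_scheme \<Rightarrow> (nat \<Rightarrow> nat) \<Rightarrow> nat \<Rightarrow> 'a set" where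
  "cut V q n = (\<Union>p \<in> rsequences q n. fruit V p)"

definition BB :: "'a souslin_scheme \<Rightarrow> 'a \<Rightarrow> 'a topology \<Rightarrow> (nat \<Rightarrow> nat) set" where
  "BB V x X = {q. q \<in> branches V x \<and>
      (\<forall>m. openin X (cut V q m \<union> {x})) \<and>
      (\<forall>U. openin X U \<and> x \<in> U \<longrightarrow> (\<exists>m. cut V q m \<union> {x} \<subseteq> U))}"

definition sorgenfrey_base :: "'a topology \<Rightarrow> 'a souslin_scheme \<Rightarrow> bool" where
  "sorgenfrey_base X V \<longleftrightarrow> open_scheme X V \<and> complete_scheme V \<and> covering_scheme X V \<and>
     (\<forall>x q n. q \<in> branches V x \<longrightarrow> (\<exists>t \<in> BB V x X. restr t n = restr q n)) \<and>
     (\<forall>q. \<exists>z. q \<in> BB V z X)"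

end

theory Submission imports Defs "HOL-Library.Nat_Bijection" begin


lemma restr_eq_iff: "restr p n = restr q n \<longleftrightarrow> (\<forall>i<n. p i = q i)"
  by (auto simp: restr_def map_eq_conv)

lemma restr_Suc: "restr p (Suc n) = restr p n @ [p n]"
  by (simp add: restr_def)

lemma length_restr[simp]: "length (restr p n) = n"
  by (simp add: restr_def)

lemma lex_less_alt: "lex_less a b \<longleftrightarrow> (\<exists>n. (\<forall>i<n. a i = b i) \<and> a n < b n)"
  by (simp add: lex_less_def restr_eq_iff)

lemma lex_less_irrefl: "\<not> lex_less a a"
  by (simp add: lex_less_alt)

lemma lex_less_asym: "lex_less a b \<Longrightarrow> \<not> lex_less b a"
  unfolding lex_less_alt
  by (metis less_asym linorder_neqE_nat)

lemma lex_less_trans: "lex_less a b \<Longrightarrow> lex_less b c \<Longrightarrow> lex_less a c"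
  unfolding lex_less_alt
proof (elim exE conjE)
  fix n m assume 1: "\<forall>i<n. a i = b i" "a n < b n" and 2: "\<forall>i<m. b i = c i" "b m < c m"
  show "\<exists>n. (\<forall>i<n. a i = c i) \<and> a n < c n"
  proof (cases "n < m")
    case True then show ?thesis using 1 2 by (intro exI[of _ n]) auto
  next
    case False show ?thesis
    proof (intro exI[of _ m] conjI allI impI)
      fix i assume "i < m"
      moreover have "i < n" using \<open>i < m\<close> False by simp
      ultimately show "a i = c i" using 1 2 by simp
    next
      show "a m < c m"
      proof (cases "m = n")
        case True then show ?thesis using 1 2 by simp
      next
        case False then have "m < n" using \<open>\<not> n < m\<close> by simp
        then show ?thesis using 1 2 by simp
      qed
    qed
  qed
qed

lemma lex_less_total: "a \<noteq> b \<Longrightarrow> lex_less a b \<or> lex_less b a"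
proof -
  assume "a \<noteq> b"
  then have "\<exists>n. a n \<noteq> b n" by auto
  define n where "n = (LEAST n. a n \<noteq> b n)"
  have "a n \<noteq> b n" using LeastI_ex[OF \<open>\<exists>n. a n \<noteq> b n\<close>] n_def by simp
  moreover have "\<forall>i<n. a i = b i" using not_less_Least n_def by blast
  ultimately show ?thesis unfolding lex_less_alt
    by (metis linorder_neqE_nat)
qed

definition N :: "(nat \<Rightarrow> nat) \<Rightarrow> nat \<Rightarrow> (nat \<Rightarrow> nat) set" where
  "N q m = {p. (p = q \<or> lex_less q p) \<and> restr p m = restr q m}"

lemma N_mono: "m \<le> m' \<Longrightarrow> N q m' \<subseteq> N q m"
  by (auto simp: N_def restr_eq_iff)

lemma q_in_N: "q \<in> N q m" by (simp add: N_def)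

definition Ttop :: "(nat \<Rightarrow> nat) topology" where
  "Ttop = topology (\<lambda>U. \<forall>q\<in>U. \<exists>m. N q m \<subseteq> U)"

lemma istop_T: "istopology (\<lambda>U. \<forall>q\<in>U. \<exists>m. N q m \<subseteq> U)"
  unfolding istopology_def
proof (intro conjI allI impI)
  fix S T :: "(nat\<Rightarrow>nat) set"
  assume a1: "\<forall>q\<in>S. \<exists>m. N q m \<subseteq> S" and a2: "\<forall>q\<in>T. \<exists>m. N q m \<subseteq> T"
  show "\<forall>q\<in>S \<inter> T. \<exists>m. N q m \<subseteq> S \<inter> T"
  proof
    fix q assume "q \<in> S \<inter> T"
    then obtain m1 m2 where "N q m1 \<subseteq> S" "N q m2 \<subseteq> T" using a1 a2 by blast
    moreover have "N q (max m1 m2) \<subseteq> N q m1" by (rule N_mono) simp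
    moreover have "N q (max m1 m2) \<subseteq> N q m2" by (rule N_mono) simp
    ultimately have "N q (max m1 m2) \<subseteq> S \<inter> T" by blast
    then show "\<exists>m. N q m \<subseteq> S \<inter> T" by blast
  qed
next
  fix K assume "\<forall>S\<in>K. \<forall>q\<in>S. \<exists>m. N q m \<subseteq> S"
  then show "\<forall>q\<in>\<Union>K. \<exists>m. N q m \<subseteq> \<Union>K"
    by (metis Union_iff Union_upper order_trans)
qed

lemma openin_T: "openin Ttop U \<longleftrightarrow> (\<forall>q\<in>U. \<exists>m. N q m \<subseteq> U)"
  unfolding Ttop_def using istop_T by simp

lemma topspace_T[simp]: "topspace Ttop = UNIV"
  unfolding topspace_def openin_T by blast

lemma N_open: "openin Ttop (N q m)"
  unfolding openin_T
proof
  fix p assume p: "p \<in> N q m"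
  show "\<exists>m'. N p m' \<subseteq> N q m"
    using p by (intro exI[of _ m]) (auto simp: N_def intro: lex_less_trans)
qed




lemma fruit_restr_0: "fruit V q \<subseteq> V []"
  unfolding fruit_def by (metis INT_lower UNIV_I restr_def upt_0 list.simps(8))

lemma scheme_to_T:
  assumes sb: "sorgenfrey_base X V" and ls: "locally_strict V" and st: "strict_branches V"
  shows "X homeomorphic_space Ttop"
proof -
  define phi where "phi q = (THE x. fruit V q = {x})" for q
  have fr: "fruit V q = {phi q}" for q
  proof -
    obtain x where x: "fruit V q = {x}" using st unfolding strict_branches_def by blast
    have "phi q = x" unfolding phi_def x by (rule the_equality) auto
    then show ?thesis using x by simp
  qed
  have cs: "covering_scheme X V" using sb unfolding sorgenfrey_base_def by blast
  have cov: "V [] = topspace X" "\<And>a. V a = (\<Union>n. V (a @ [n]))"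
    using cs unfolding covering_scheme_def by blast+
  have dis: "\<And>a m k. m \<noteq> k \<Longrightarrow> V (a @ [m]) \<inter> V (a @ [k]) = {}"
    using ls unfolding locally_strict_def by blast
  have inX: "phi q \<in> topspace X" for q using fruit_restr_0[of V q] fr cov(1) by auto
  have inj: "inj phi"
  proof (rule injI)
    fix p q assume e: "phi p = phi q"
    show "p = q"
    proof (rule ccontr)
      assume "p \<noteq> q"
      then have "\<exists>n. p n \<noteq> q n" by auto
      define n where "n = (LEAST n. p n \<noteq> q n)"
      have pn: "p n \<noteq> q n" using LeastI_ex[OF \<open>\<exists>n. p n \<noteq> q n\<close>] n_def by simp
      have "\<forall>i<n. p i = q i" using not_less_Least n_def by blast
      then have rr: "restr p n = restr q n" by (simp add: restr_eq_iff)
      have "phi p \<in> V (restr p (Suc n))" using fr[of p] unfolding fruit_def by auto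
      moreover have "phi q \<in> V (restr q (Suc n))" using fr[of q] unfolding fruit_def by auto
      ultimately have "phi p \<in> V (restr p n @ [p n]) \<inter> V (restr p n @ [q n])"
        using e rr unfolding restr_Suc by simp
      then show False using dis[OF pn] by simp
    qed
  qed
  have surj: "phi ` UNIV = topspace X"
  proof (intro equalityI subsetI)
    fix x assume x: "x \<in> topspace X"
    define f where "f a = (SOME k. x \<in> V (a @ [k]))" for a
    define pre where "pre = rec_nat [] (\<lambda>n l. l @ [f l])"
    have pre0: "pre 0 = []" and preS: "pre (Suc n) = pre n @ [f (pre n)]" for n
      by (simp_all add: pre_def)
    have xin: "x \<in> V (pre n)" for n
    proof (induction n)
      case 0 then show ?case using x cov(1) by (simp add: pre0)
    next
      case (Suc n)
      then have "\<exists>k. x \<in> V (pre n @ [k])" using cov(2)[of "pre n"] by auto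
      then show ?case unfolding preS f_def by (rule someI_ex)
    qed
    define q where "q n = f (pre n)" for n
    have "restr q n = pre n" for n
      by (induction n) (simp_all add: restr_def pre0 preS q_def[symmetric] del: upt_Suc, simp add: q_def)
    then have "x \<in> fruit V q" using xin unfolding fruit_def by auto
    then show "x \<in> phi ` UNIV" using fr by auto
  qed (use inX in auto)
  have BBq: "q \<in> BB V (phi q) X" for q
  proof -
    obtain z where z: "q \<in> BB V z X" using sb unfolding sorgenfrey_base_def by blast
    then have "z \<in> fruit V q" by (simp add: BB_def branches_def)
    then show ?thesis using z fr by simp
  qed
  have cutN: "cut V q m \<union> {phi q} = phi ` N q m" for q m
    unfolding cut_def N_def rsequences_def fr by auto
  have hm: "homeomorphic_map Ttop X phi"
  proof (rule bijective_open_imp_homeomorphic_map)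
    show "continuous_map Ttop X phi"
      unfolding continuous_map_def
    proof (intro conjI allI impI)
      show "phi \<in> topspace Ttop \<rightarrow> topspace X" using inX by auto
      fix U assume U: "openin X U"
      show "openin Ttop {x \<in> topspace Ttop. phi x \<in> U}"
        unfolding openin_T
      proof
        fix q assume "q \<in> {x \<in> topspace Ttop. phi x \<in> U}"
        then have "phi q \<in> U" by simp
        then obtain m where "cut V q m \<union> {phi q} \<subseteq> U" using BBq[of q] U unfolding BB_def by blast
        then show "\<exists>m. N q m \<subseteq> {x \<in> topspace Ttop. phi x \<in> U}"
          unfolding cutN by auto
      qed
    qed
    show "open_map Ttop X phi"
      unfolding open_map_def
    proof (intro allI impI)
      fix W assume W: "openin Ttop W"
      show "openin X (phi ` W)"
      proof (subst openin_subopen, intro ballI)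
        fix x assume "x \<in> phi ` W"
        then obtain q where q: "q \<in> W" "x = phi q" by auto
        then obtain m where m: "N q m \<subseteq> W" using W openin_T by blast
        have "openin X (cut V q m \<union> {phi q})" using BBq[of q] unfolding BB_def by simp
        then have "openin X (phi ` N q m)" unfolding cutN .
        moreover have "x \<in> phi ` N q m" using q q_in_N by auto
        ultimately show "\<exists>T. openin X T \<and> x \<in> T \<and> T \<subseteq> phi ` W" using m by blast
      qed
    qed
  qed (use surj inj in auto)
  then show ?thesis using homeomorphic_map_imp_homeomorphic_space homeomorphic_space_sym by blast
qed




definition sh :: "(nat \<Rightarrow> nat) \<Rightarrow> nat \<Rightarrow> nat" where "sh p = (\<lambda>n. p (Suc n))"

definition ssum :: "(nat \<Rightarrow> nat) \<Rightarrow> nat \<Rightarrow> nat" where "ssum p n = (\<Sum>i<n. Suc (p i))"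

lemma ssum_Suc_shift: "ssum p (Suc n) = Suc (p 0) + ssum (sh p) n"
  unfolding ssum_def sh_def by (simp only: sum.lessThan_Suc_shift)

lemma ssum_ge: "n \<le> ssum p n"
  unfolding ssum_def by (induction n) auto

definition SS :: "(nat \<Rightarrow> nat) \<Rightarrow> real" where "SS p = (\<Sum>n. (1/2::real) ^ ssum p (Suc n))"

lemma summ_aux: "summable (\<lambda>n. (1/2::real) ^ ssum p n)"
proof (rule summable_comparison_test[where g = "\<lambda>n. (1/2::real)^n"])
  show "\<exists>N. \<forall>n\<ge>N. norm ((1/2::real) ^ ssum p n) \<le> (1/2)^n"
    using ssum_ge by (auto intro!: power_decreasing)
qed simp

lemma summ_SS: "summable (\<lambda>n. (1/2::real) ^ ssum p (Suc n))"
  using summ_aux[of p] summable_ignore_initial_segment[of _ 1] by simp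

lemma SS_rec: "SS p = (1/2)^(Suc (p 0)) * (1 + SS (sh p))"
proof -
  have "SS p = (\<Sum>n. (1/2::real)^(Suc (p 0)) * (1/2) ^ ssum (sh p) n)"
    unfolding SS_def ssum_Suc_shift by (simp add: power_add)
  also have "\<dots> = (1/2)^(Suc (p 0)) * (\<Sum>n. (1/2::real) ^ ssum (sh p) n)"
    using summ_aux by (rule suminf_mult)
  also have "(\<Sum>n. (1/2::real) ^ ssum (sh p) n) = 1 + SS (sh p)"
    unfolding SS_def using suminf_split_head[OF summ_aux[of "sh p"]]
    by (simp add: ssum_def)
  finally show ?thesis .
qed

lemma SS_pos: "0 < SS p"
  unfolding SS_def using summ_SS by (rule suminf_pos) simp

lemma SS_le: "SS p \<le> 1"
proof -
  have "SS p \<le> (\<Sum>n. (1/2::real)^(Suc n))"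
    unfolding SS_def
  proof (rule suminf_le)
    show "\<And>n. (1/2::real)^ssum p (Suc n) \<le> (1/2)^(Suc n)"
      by (rule power_decreasing) (use ssum_ge in auto)
  qed (use summ_SS in auto)
  also have "\<dots> = 1"
    using power_half_series sums_unique by fastforce
  finally show ?thesis .
qed

definition G :: "(nat \<Rightarrow> nat) \<Rightarrow> real" where "G p = 1 - SS p"

lemma G_bounds: "0 \<le> G p" "G p < 1"
  using SS_pos[of p] SS_le[of p] by (auto simp: G_def)

lemma G_rec: "G p = 1 - (1/2)^(p 0) + (1/2)^(Suc (p 0)) * G (sh p)"
proof -
  have h: "(1/2::real)^(p 0) = 2 * (1/2)^(Suc (p 0))" by simp
  have g: "\<And>c S::real. 1 - c*(1+S) = 1 - 2*c + c*(1 - S)" by algebra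
  show ?thesis unfolding G_def SS_rec[of p] h by (rule g)
qed

lemma G_range: "1 - (1/2)^(p 0) \<le> G p" "G p < 1 - (1/2)^(Suc (p 0))"
proof -
  have c: "(0::real) < (1/2)^(Suc (p 0))" by simp
  show "1 - (1/2)^(p 0) \<le> G p" using G_rec[of p] G_bounds(1)[of "sh p"] c by simp
  have "(1/2)^(Suc (p 0)) * G (sh p) < (1/2)^(Suc (p 0)) * 1"
    using G_bounds(2)[of "sh p"] c by (rule mult_strict_left_mono)
  moreover have h: "(1/2::real)^(p 0) = 2 * (1/2)^(Suc (p 0))" by simp
  ultimately show "G p < 1 - (1/2)^(Suc (p 0))" using G_rec[of p] by linarith
qed

lemma G_mono_aux: "(\<forall>i<n. p i = q i) \<Longrightarrow> p n < q n \<Longrightarrow> G p < G q"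
proof (induction n arbitrary: p q)
  case 0
  then have "Suc (p 0) \<le> q 0" by simp
  then have "(1/2::real)^(q 0) \<le> (1/2)^(Suc (p 0))" by (rule power_decreasing) auto
  then show ?case using G_range[of p] G_range[of q] by linarith
next
  case (Suc n)
  have "G (sh p) < G (sh q)"
    using Suc.prems by (intro Suc.IH) (auto simp: sh_def)
  moreover have "p 0 = q 0" using Suc.prems by auto
  ultimately show ?case using G_rec[of p] G_rec[of q] by simp
qed

lemma G_mono: "lex_less p q \<Longrightarrow> G p < G q"
  unfolding lex_less_alt using G_mono_aux by blast

lemma G_mono_iff: "lex_less p q \<longleftrightarrow> G p < G q"
  by (metis G_mono lex_less_total less_asym less_irrefl)

lemma G_inj: "inj G"
  by (rule injI) (metis G_mono lex_less_total less_irrefl)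

definition D :: "real \<Rightarrow> nat" where "D x = (LEAST k. x < 1 - (1/2)^(Suc k))"

definition R :: "real \<Rightarrow> real" where "R x = 2^(Suc (D x)) * (x - (1 - (1/2)^(D x)))"

lemma D_props:
  assumes "0 \<le> x" "x < 1"
  shows "1 - (1/2)^(D x) \<le> x" "x < 1 - (1/2)^(Suc (D x))"
proof -
  have "\<exists>k. (1/2::real)^(Suc k) < 1 - x"
  proof -
    obtain n where "(1/2::real)^n < 1 - x" using real_arch_pow_inv[of "1-x" "1/2"] assms by auto
    moreover have "(1/2::real)^(Suc n) \<le> (1/2)^n" by (rule power_decreasing) auto
    ultimately show ?thesis by (intro exI[of _ n]) linarith
  qed
  then have ex: "\<exists>k. x < 1 - (1/2)^(Suc k)" by (metis diff_less_eq add.commute less_diff_eq)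
  show "x < 1 - (1/2)^(Suc (D x))" unfolding D_def by (rule LeastI_ex[OF ex])
  show "1 - (1/2)^(D x) \<le> x"
  proof (cases "D x")
    case 0 then show ?thesis using assms by simp
  next
    case (Suc k)
    then have "\<not> x < 1 - (1/2)^(Suc k)" unfolding D_def by (metis lessI not_less_Least)
    then show ?thesis using Suc by simp
  qed
qed

lemma R_props:
  assumes "0 \<le> x" "x < 1"
  shows "0 \<le> R x" "R x < 1" "x = 1 - (1/2)^(D x) + (1/2)^(Suc (D x)) * R x"
proof -
  note d = D_props[OF assms]
  have p: "(0::real) < 2^(Suc (D x))" by simp
  show "0 \<le> R x" unfolding R_def using d p by simp
  have e: "(1/2::real)^(Suc (D x)) * 2^(Suc (D x)) = 1"
    by (simp add: power_mult_distrib[symmetric])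
  show "x = 1 - (1/2)^(D x) + (1/2)^(Suc (D x)) * R x"
  proof -
    have "(1/2::real)^(Suc (D x)) * R x = x - (1 - (1/2)^(D x))"
      unfolding R_def by (simp only: mult.assoc[symmetric] e) simp
    then show ?thesis by linarith
  qed
  have "x - (1 - (1/2)^(D x)) < (1/2)^(Suc (D x))" using d by simp
  then have "2^(Suc (D x)) * (x - (1 - (1/2)^(D x))) < 2^(Suc (D x)) * (1/2::real)^(Suc (D x))"
    using p by (rule mult_strict_left_mono)
  moreover have e2: "2^(Suc (D x)) * (1/2::real)^(Suc (D x)) = 1"
    by (simp add: power_mult_distrib[symmetric])
  ultimately show "R x < 1" unfolding R_def by linarith
qed

definition P :: "real \<Rightarrow> nat \<Rightarrow> nat" where "P x n = D ((R ^^ n) x)"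

lemma sh_P: "sh (P x) = P (R x)"
  unfolding sh_def P_def by (simp add: funpow_Suc_right del: funpow.simps)

lemma P0: "P x 0 = D x" by (simp add: P_def)

lemma G_P_approx: "0 \<le> x \<Longrightarrow> x < 1 \<Longrightarrow> \<bar>G (P x) - x\<bar> \<le> (1/2)^n"
proof (induction n arbitrary: x)
  case 0 then show ?case using G_bounds[of "P x"] by simp
next
  case (Suc n)
  note r = R_props[OF Suc.prems]
  have "G (P x) - x = (1/2)^(Suc (D x)) * (G (P (R x)) - R x)"
    using G_rec[of "P x"] r(3) by (simp add: P0 sh_P algebra_simps)
  then have "\<bar>G (P x) - x\<bar> = \<bar>(1/2::real)^(Suc (D x))\<bar> * \<bar>G (P (R x)) - R x\<bar>"
    by (simp only: abs_mult)
  also have "\<dots> = (1/2)^(Suc (D x)) * \<bar>G (P (R x)) - R x\<bar>" by simp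
  also have "\<dots> \<le> (1/2)^(Suc 0) * (1/2)^n"
    by (rule mult_mono) (use Suc.IH[OF r(1) r(2)] in \<open>auto intro: power_decreasing simp: power_le_one\<close>)
  finally show ?case by simp
qed

lemma G_surj: "0 \<le> x \<Longrightarrow> x < 1 \<Longrightarrow> G (P x) = x"
proof (rule ccontr)
  assume a: "0 \<le> x" "x < 1" "G (P x) \<noteq> x"
  then have "0 < \<bar>G (P x) - x\<bar>" by simp
  then obtain n where "(1/2::real)^n < \<bar>G (P x) - x\<bar>" using real_arch_pow_inv[of _ "1/2::real"] by force
  then show False using G_P_approx[OF a(1,2), of n] by simp
qed




lemma sorg_open: "openin sorgenfrey_line U \<longleftrightarrow> (\<forall>x\<in>U. \<exists>e>0. {x..<x+e} \<subseteq> U)"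
proof
  assume "openin sorgenfrey_line U"
  then have "generate_topology_on {{a..<b} | a b. True} U"
    unfolding sorgenfrey_line_def by (rule openin_topology_generated_by)
  then show "\<forall>x\<in>U. \<exists>e>0. {x..<x+e} \<subseteq> U"
  proof (induction rule: generate_topology_on.induct)
    case Empty then show ?case by simp
  next
    case (Int a b)
    show ?case
    proof
      fix x assume "x \<in> a \<inter> b"
      then obtain e1 e2 where e: "e1 > 0" "{x..<x+e1} \<subseteq> a" "e2 > 0" "{x..<x+e2} \<subseteq> b"
        using Int.IH by blast
      have m1: "{x..<x+min e1 e2} \<subseteq> {x..<x+e1}" by (simp add: ivl_subset)
      have m2: "{x..<x+min e1 e2} \<subseteq> {x..<x+e2}" by (simp add: ivl_subset)
      have "{x..<x+min e1 e2} \<subseteq> a \<inter> b" using m1 m2 e(2,4) by (meson Int_greatest order_trans)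
      moreover have "min e1 e2 > 0" using e(1,3) by simp
      ultimately show "\<exists>e>0. {x..<x+e} \<subseteq> a \<inter> b" by (intro exI[of _ "min e1 e2"]) simp
    qed
  next
    case (UN K)
    then show ?case by (meson Union_iff subset_iff)
  next
    case (Basis s)
    then obtain a b where s: "s = {a..<b}" by blast
    show ?case
    proof
      fix x assume "x \<in> s"
      then show "\<exists>e>0. {x..<x+e} \<subseteq> s" unfolding s by (intro exI[of _ "b - x"]) auto
    qed
  qed
next
  assume a: "\<forall>x\<in>U. \<exists>e>0. {x..<x+e} \<subseteq> U"
  then have "U = (\<Union>x\<in>U. {x..<x + (SOME e. e > 0 \<and> {x..<x+e} \<subseteq> U)})"
  proof (intro equalityI subsetI)
    fix y assume "y \<in> U"
    moreover have "(SOME e. e > 0 \<and> {y..<y+e} \<subseteq> U) > 0"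
      using someI_ex[OF a[rule_format, OF \<open>y \<in> U\<close>]] by blast
    ultimately show "y \<in> (\<Union>x\<in>U. {x..<x + (SOME e. e > 0 \<and> {x..<x+e} \<subseteq> U)})" by force
  next
    fix y assume "y \<in> (\<Union>x\<in>U. {x..<x + (SOME e. e > 0 \<and> {x..<x+e} \<subseteq> U)})"
    then obtain x where "x \<in> U" "y \<in> {x..<x + (SOME e. e > 0 \<and> {x..<x+e} \<subseteq> U)}" by blast
    moreover have "{x..<x + (SOME e. e > 0 \<and> {x..<x+e} \<subseteq> U)} \<subseteq> U"
      using someI_ex[OF a[rule_format, OF \<open>x \<in> U\<close>]] by blast
    ultimately show "y \<in> U" by blast
  qed
  moreover have "openin sorgenfrey_line (\<Union>x\<in>U. {x..<x + (SOME e. e > 0 \<and> {x..<x+e} \<subseteq> U)})"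
    unfolding sorgenfrey_line_def
    by (rule openin_Union) (auto intro: topology_generated_by_Basis)
  ultimately show "openin sorgenfrey_line U" by simp
qed

lemma sorg_topspace[simp]: "topspace sorgenfrey_line = UNIV"
proof -
  have "openin sorgenfrey_line UNIV" unfolding sorg_open by (auto intro: exI[of _ 1])
  then show ?thesis by (metis openin_subset top.extremum_uniqueI)
qed

lemma sorg_Hausdorff: "Hausdorff_space sorgenfrey_line"
  unfolding Hausdorff_space_def
proof (intro allI impI)
  have o: "openin sorgenfrey_line {a..<b}" for a b
    unfolding sorgenfrey_line_def by (rule topology_generated_by_Basis) blast
  fix x y :: real assume "x \<in> topspace sorgenfrey_line \<and> y \<in> topspace sorgenfrey_line \<and> x \<noteq> y"
  then consider "x < y" | "y < x" by fastforce
  then show "\<exists>U V. openin sorgenfrey_line U \<and> openin sorgenfrey_line V \<and> x \<in> U \<and> y \<in> V \<and> disjnt U V"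
  proof cases
    case 1 then show ?thesis
      by (intro exI[of _ "{x..<y}"] exI[of _ "{y..<y+1}"]) (auto simp: o disjnt_def)
  next
    case 2 then show ?thesis
      by (intro exI[of _ "{x..<x+1}"] exI[of _ "{y..<x}"]) (auto simp: o disjnt_def)
  qed
qed

lemma G_le_N: "p \<in> N q m \<Longrightarrow> G q \<le> G p"
  unfolding N_def using G_mono by fastforce

lemma G_cont: "e > 0 \<Longrightarrow> \<exists>m. \<forall>p\<in>N q m. G p < G q + e"
proof (cases "G q + e < 1")
  case False
  then show ?thesis using G_bounds by (metis less_le_trans not_le)
next
  case True
  assume e: "e > 0"
  define r where "r = P (G q + e)"
  have Gr: "G r = G q + e" unfolding r_def using True e G_bounds[of q] by (intro G_surj) auto
  then have "lex_less q r" using G_mono_iff e by simp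
  then obtain n where n: "\<forall>i<n. q i = r i" "q n < r n" unfolding lex_less_alt by blast
  show ?thesis
  proof (intro exI[of _ "Suc n"] ballI)
    fix p assume "p \<in> N q (Suc n)"
    then have "\<forall>i<Suc n. p i = q i" by (simp add: N_def restr_eq_iff)
    then have "lex_less p r" unfolding lex_less_alt using n by (intro exI[of _ n]) auto
    then show "G p < G q + e" using Gr by (metis G_mono)
  qed
qed

lemma G_openN: "\<exists>e>0. \<forall>y. G q \<le> y \<and> y < G q + e \<longrightarrow> (\<exists>p\<in>N q m. G p = y)"
proof -
  define r where "r = q(m := Suc (q m))"
  have qr: "lex_less q r" unfolding lex_less_alt r_def by (intro exI[of _ m]) auto
  show ?thesis
  proof (intro exI[of _ "G r - G q"] conjI allI impI)
    show "G r - G q > 0" using G_mono[OF qr] by simp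
    fix y assume y: "G q \<le> y \<and> y < G q + (G r - G q)"
    then have y01: "0 \<le> y" "y < 1" using G_bounds[of q] G_bounds[of r] by auto
    define p where "p = P y"
    have Gp: "G p = y" unfolding p_def using y01 by (rule G_surj)
    have pq: "p = q \<or> lex_less q p" using Gp y G_mono lex_less_total by fastforce
    have pr: "lex_less p r" using Gp y G_mono_iff by auto
    have "restr p m = restr q m"
    proof (cases "p = q")
      case False
      with pq have "lex_less q p" by simp
      from pr obtain n where n: "\<forall>i<n. p i = r i" "p n < r n" unfolding lex_less_alt by blast
      have "m \<le> n"
      proof (rule ccontr)
        assume "\<not> m \<le> n"
        then have "\<forall>i<n. p i = q i" "p n < q n" using n by (auto simp: r_def)
        then have "lex_less p q" unfolding lex_less_alt by blast
        then show False using \<open>lex_less q p\<close> lex_less_asym by blast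
      qed
      then show ?thesis using n by (auto simp: restr_eq_iff r_def)
    qed simp
    then show "\<exists>p\<in>N q m. G p = y" using pq Gp by (auto simp: N_def)
  qed
qed

definition cns :: "nat \<Rightarrow> (nat \<Rightarrow> nat) \<Rightarrow> nat \<Rightarrow> nat" where
  "cns k r = (\<lambda>n. case n of 0 \<Rightarrow> k | Suc j \<Rightarrow> r j)"

lemma cns_simps[simp]: "cns k r 0 = k" "sh (cns k r) = r"
  by (auto simp: cns_def sh_def)

lemma cns_sh: "cns (p 0) (sh p) = p"
  by (rule ext) (auto simp: cns_def sh_def split: nat.split)

lemma N_Suc: "p \<in> N q (Suc m) \<longleftrightarrow> p 0 = q 0 \<and> sh p \<in> N (sh q) m"
proof -
  have r: "restr p (Suc m) = restr q (Suc m) \<longleftrightarrow> p 0 = q 0 \<and> restr (sh p) m = restr (sh q) m"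
    unfolding restr_eq_iff sh_def by (auto simp: less_Suc_eq_0_disj)
  have e: "p 0 = q 0 \<Longrightarrow> (p = q \<longleftrightarrow> sh p = sh q)"
    by (metis cns_sh)
  have l: "p 0 = q 0 \<Longrightarrow> (lex_less q p \<longleftrightarrow> lex_less (sh q) (sh p))"
  proof
    assume "p 0 = q 0" "lex_less q p"
    then obtain n where n: "\<forall>i<n. q i = p i" "q n < p n" unfolding lex_less_alt by blast
    then obtain j where j: "n = Suc j" using \<open>p 0 = q 0\<close> by (cases n) auto
    show "lex_less (sh q) (sh p)" unfolding lex_less_alt sh_def using n j by (intro exI[of _ j]) auto
  next
    assume "p 0 = q 0" "lex_less (sh q) (sh p)"
    then obtain n where n: "\<forall>i<n. q (Suc i) = p (Suc i)" "q (Suc n) < p (Suc n)"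
      unfolding lex_less_alt sh_def by blast
    show "lex_less q p" unfolding lex_less_alt using n \<open>p 0 = q 0\<close>
      by (intro exI[of _ "Suc n"]) (auto simp: less_Suc_eq_0_disj)
  qed
  show ?thesis unfolding N_def using r e l by auto
qed

definition HH :: "(nat \<Rightarrow> nat) \<Rightarrow> real" where
  "HH p = real_of_int (int_decode (p 0)) + G (sh p)"

lemma floor_HH: "\<lfloor>HH p\<rfloor> = int_decode (p 0)"
  unfolding HH_def using G_bounds[of "sh p"] by (intro floor_unique) auto

lemma T_sorg: "homeomorphic_map Ttop sorgenfrey_line HH"
proof (rule bijective_open_imp_homeomorphic_map)
  show "HH ` topspace Ttop = topspace sorgenfrey_line"
  proof (simp, intro equalityI subsetI)
    fix y :: real
    define z where "z = \<lfloor>y\<rfloor>"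
    have "0 \<le> y - z" "y - z < 1" unfolding z_def by linarith+
    then have "HH (cns (int_encode z) (P (y - z))) = y"
      unfolding HH_def by (simp add: G_surj)
    then show "y \<in> range HH" by (metis rangeI)
  qed auto
  show "inj_on HH (topspace Ttop)"
  proof (simp, rule injI)
    fix p q assume e: "HH p = HH q"
    then have "int_decode (p 0) = int_decode (q 0)" using floor_HH by metis
    then have 0: "p 0 = q 0" by (metis int_decode_inverse)
    then have "G (sh p) = G (sh q)" using e by (simp add: HH_def)
    then have "sh p = sh q" using G_inj by (simp add: inj_eq)
    then show "p = q" using 0 by (metis cns_sh)
  qed
  show "continuous_map Ttop sorgenfrey_line HH"
    unfolding continuous_map_def
  proof (intro conjI allI impI)
    show "HH \<in> topspace Ttop \<rightarrow> topspace sorgenfrey_line" by simp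
    fix U assume U: "openin sorgenfrey_line U"
    show "openin Ttop {x \<in> topspace Ttop. HH x \<in> U}"
      unfolding openin_T
    proof
      fix q assume "q \<in> {x \<in> topspace Ttop. HH x \<in> U}"
      then obtain e where e: "e > 0" "{HH q..<HH q + e} \<subseteq> U" using U sorg_open by force
      obtain m where m: "\<forall>p\<in>N (sh q) m. G p < G (sh q) + e" using G_cont[OF e(1)] by blast
      show "\<exists>m. N q m \<subseteq> {x \<in> topspace Ttop. HH x \<in> U}"
      proof (intro exI[of _ "Suc m"] subsetI)
        fix p assume "p \<in> N q (Suc m)"
        then have p: "p 0 = q 0" "sh p \<in> N (sh q) m" by (auto simp: N_Suc)
        then have "HH p \<in> {HH q..<HH q + e}"
          using m G_le_N[OF p(2)] by (auto simp: HH_def)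
        then show "p \<in> {x \<in> topspace Ttop. HH x \<in> U}" using e by auto
      qed
    qed
  qed
  show "open_map Ttop sorgenfrey_line HH"
    unfolding open_map_def
  proof (intro allI impI)
    fix W assume W: "openin Ttop W"
    show "openin sorgenfrey_line (HH ` W)"
      unfolding sorg_open
    proof
      fix y assume "y \<in> HH ` W"
      then obtain q where q: "q \<in> W" "y = HH q" by auto
      then obtain m where m: "N q m \<subseteq> W" using W openin_T by blast
      then have m': "N q (Suc m) \<subseteq> W" using N_mono[of m "Suc m" q] by auto
      obtain e where e: "e > 0" "\<forall>y. G (sh q) \<le> y \<and> y < G (sh q) + e \<longrightarrow> (\<exists>p\<in>N (sh q) m. G p = y)"
        using G_openN by blast
      show "\<exists>e>0. {y..<y+e} \<subseteq> HH ` W"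
      proof (intro exI[of _ e] conjI subsetI)
        show "e > 0" by (rule e(1))
        fix y' assume "y' \<in> {y..<y+e}"
        then have "G (sh q) \<le> y' - int_decode (q 0) \<and> y' - int_decode (q 0) < G (sh q) + e"
          using q by (auto simp: HH_def)
        then obtain r where r: "r \<in> N (sh q) m" "G r = y' - int_decode (q 0)" using e(2) by blast
        have "cns (q 0) r \<in> N q (Suc m)" using r by (simp add: N_Suc)
        moreover have "HH (cns (q 0) r) = y'" using r by (simp add: HH_def)
        ultimately show "y' \<in> HH ` W" using m' by (metis image_eqI subsetD)
      qed
    qed
  qed
qed




definition cyl :: "nat list \<Rightarrow> (nat \<Rightarrow> nat) set" where
  "cyl a = {p. restr p (length a) = a}"

lemma cyl_open: "openin Ttop (cyl a)"
  unfolding openin_T cyl_def N_def by (metis (mono_tags, lifting) mem_Collect_eq subsetI)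

lemma cyl_split: "cyl a = (\<Union>n. cyl (a @ [n]))"
proof (intro equalityI subsetI)
  fix p assume "p \<in> cyl a"
  then have "p \<in> cyl (a @ [p (length a)])" by (simp add: cyl_def restr_Suc)
  then show "p \<in> (\<Union>n. cyl (a @ [n]))" by blast
next
  fix p assume "p \<in> (\<Union>n. cyl (a @ [n]))"
  then show "p \<in> cyl a" by (auto simp: cyl_def restr_Suc)
qed

lemma cyl_disj: "m \<noteq> k \<Longrightarrow> cyl (a @ [m]) \<inter> cyl (a @ [k]) = {}"
  by (auto simp: cyl_def restr_Suc)

lemma cyl_Inter: "(\<Inter>n. cyl (restr p n)) = {p}"
proof (intro equalityI subsetI)
  fix r assume "r \<in> (\<Inter>n. cyl (restr p n))"
  then have "\<forall>n. restr r n = restr p n" by (auto simp: cyl_def)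
  then have "\<forall>n. r n = p n" by (metis lessI restr_eq_iff)
  then show "r \<in> {p}" by auto
qed (auto simp: cyl_def)

lemma T_to_scheme:
  assumes hm: "homeomorphic_map Ttop Y H"
  shows "\<exists>V. sorgenfrey_base Y V \<and> locally_strict V \<and> strict_branches V"
proof -
  define V where "V a = H ` cyl a" for a
  have inj: "inj H" using homeomorphic_imp_injective_map[OF hm] by simp
  have surj: "H ` UNIV = topspace Y" using homeomorphic_imp_surjective_map[OF hm] by simp
  have om: "openin Ttop U \<Longrightarrow> openin Y (H ` U)" for U
    using homeomorphic_imp_open_map[OF hm] unfolding open_map_def by blast
  have cm: "openin Y U \<Longrightarrow> openin Ttop {x. H x \<in> U}" for U
    using homeomorphic_imp_continuous_map[OF hm] unfolding continuous_map_def by auto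
  have fr: "fruit V p = {H p}" for p
  proof -
    have "fruit V p = (\<Inter>n. H ` cyl (restr p n))" by (simp add: fruit_def V_def)
    also have "\<dots> = H ` (\<Inter>n. cyl (restr p n))"
      using inj by (simp add: image_INT)
    finally show ?thesis by (simp add: cyl_Inter)
  qed
  have cutN: "cut V q m \<union> {H q} = H ` N q m" for q m
    unfolding cut_def N_def rsequences_def fr by auto
  have BBq: "q \<in> BB V (H q) Y" for q
    unfolding BB_def
  proof (intro CollectI conjI allI impI)
    show "q \<in> branches V (H q)" by (simp add: branches_def fr)
    fix m show "openin Y (cut V q m \<union> {H q})" unfolding cutN by (rule om[OF N_open])
  next
    fix U assume U: "openin Y U \<and> H q \<in> U"
    then have "openin Ttop {x. H x \<in> U}" using cm by blast
    then obtain m where "N q m \<subseteq> {x. H x \<in> U}" using U unfolding openin_T by blast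
    then show "\<exists>m. cut V q m \<union> {H q} \<subseteq> U" unfolding cutN by blast
  qed
  have "sorgenfrey_base Y V"
    unfolding sorgenfrey_base_def
  proof (intro conjI allI impI)
    show "open_scheme Y V" unfolding open_scheme_def V_def using om cyl_open by blast
    show "complete_scheme V" unfolding complete_scheme_def fr by simp
    have "cyl [] = UNIV" by (simp add: cyl_def restr_def)
    then show "covering_scheme Y V" unfolding covering_scheme_def V_def
      using surj cyl_split by (metis image_UN)
    fix x q n assume "q \<in> branches V x"
    then have "x = H q" by (simp add: branches_def fr)
    then show "\<exists>t\<in>BB V x Y. restr t n = restr q n" using BBq by blast
  next
    fix q show "\<exists>z. q \<in> BB V z Y" using BBq by blast
  qed
  moreover have "locally_strict V"
    unfolding locally_strict_def V_def
    using cyl_split cyl_disj inj by (metis image_UN image_Int image_empty)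
  moreover have "strict_branches V" unfolding strict_branches_def fr by blast
  ultimately show ?thesis by blast
qed


theorem mainTheorem10:
  shows "Hausdorff_space sorgenfrey_line \<and>
    (\<exists>V. sorgenfrey_base sorgenfrey_line V \<and> locally_strict V \<and> strict_branches V) \<and>
    (\<forall>X :: 'a topology. Hausdorff_space X \<and>
       (\<exists>V. sorgenfrey_base X V \<and> locally_strict V \<and> strict_branches V) \<longrightarrow>
       X homeomorphic_space sorgenfrey_line)"
proof (intro conjI allI impI)
  show "Hausdorff_space sorgenfrey_line" by (rule sorg_Hausdorff)
  show "\<exists>V. sorgenfrey_base sorgenfrey_line V \<and> locally_strict V \<and> strict_branches V"
    by (rule T_to_scheme[OF T_sorg])
  fix X :: "'a topology"
  assume "Hausdorff_space X \<and> (\<exists>V. sorgenfrey_base X V \<and> locally_strict V \<and> strict_branches V)"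
  then obtain V where "sorgenfrey_base X V" "locally_strict V" "strict_branches V" by blast
  then have "X homeomorphic_space Ttop" by (rule scheme_to_T)
  moreover have "Ttop homeomorphic_space sorgenfrey_line"
    by (rule homeomorphic_map_imp_homeomorphic_space[OF T_sorg])
  ultimately show "X homeomorphic_space sorgenfrey_line" by (rule homeomorphic_space_trans)
qed

end
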